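(* Let $\mathcal T$ be an atomic orbital category and $\mathcal C$ an almost essentially unital $\mathcal T$-weak indexing system. Then $\mathcal C=\mathrm{Cl}_\infty(\mathcal C\cap\underline{\mathbb F}^{sparse}_{\mathcal T})$, the smallest $\mathcal T$-weak indexing system containing all sparse elements of $\mathcal C$.
   Context: For a small category $\mathcal T$, $\mathbb F_{\mathcal T}$ is the full subcategory of $\mathrm{Fun}(\mathcal T^{op},\mathrm{Set})$ on finite coproducts of representables; $\mathcal T$ is orbital if $\mathbb F_{\mathcal T}$ has pullbacks, and atomic if every morphism of $\mathcal T$ admitting a section is an isomorphism. $\mathbb F_V:=\mathbb F_{\mathcal T,/V}$, $*_V$ terminal; for $U\to V$, $\mathrm{Res}^V_U$ is pullback and $\mathrm{Ind}^V_U$ postcomposition. A full $\mathcal T$-subcategory assigns isomorphism-closed classes $\mathcal C_V\subseteq\mathrm{Ob}\,\mathbb F_V$ stable under restriction. For $S\in\mathbb F_V$ with orbits $U$ and $T_U\in\mathbb F_U$, $\coprod_U^ST_U:=\coprod_U\mathrm{Ind}_U^VT_U$. A $\mathcal T$-weak indexing system is a full $\mathcal T$-subcategory with $\mathcal C_V\neq\emptyset\Rightarrow *_V\in\mathcal C_V$ and closed under $\coprod^S_UT_U$ for $S\in\mathcal C_V$, $T_U\in\mathcal C_U$; since intersections of weak indexing systems are weak indexing systems, every collection of finite sets is contained in a smallest one. It is almost essentially unital if whenever $S\sqcup S'\in\mathcal C_V$ is not isomorphic to $*_V$, we have $S,S'\in\mathcal C_V$. A $V$-set is sparse if it has the form $\varepsilon\cdot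 *_V\sqcup W_1\sqcup\cdots\sqcup W_n$ with $\varepsilon\in\{0,1\}$ and orbits $W_i\in\mathcal T_{/V}$ such that there is no map $W_i\to W_j$ in $\mathcal T_{/V}$ for $i\neq j$; $\mathcal C\cap\underline{\mathbb F}^{sparse}_{\mathcal T}$ is the collection $V\mapsto\{S\in\mathcal C_V\mid S\text{ sparse}\}$. *)

theory Defs
  imports Main
begin

text \<open>A small category: object set, arrow set, domain, codomain, identities and
composition (ccomp C g f is g after f).\<close>

record ('o, 'm) cat =
  cobj :: "'o set"
  carr :: "'m set"
  cdom :: "'m \<Rightarrow> 'o"
  ccod :: "'m \<Rightarrow> 'o"
  cid  :: "'o \<Rightarrow> 'm"
  ccomp :: "'m \<Rightarrow> 'm \<Rightarrow> 'm"

definition is_cat :: "('o, 'm) cat \<Rightarrow> bool" where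
  "is_cat C \<longleftrightarrow>
     (\<forall>f\<in>carr C. cdom C f \<in> cobj C \<and> ccod C f \<in> cobj C)
   \<and> (\<forall>a\<in>cobj C. cid C a \<in> carr C \<and> cdom C (cid C a) = a \<and> ccod C (cid C a) = a)
   \<and> (\<forall>f\<in>carr C. \<forall>g\<in>carr C. ccod C f = cdom C g \<longrightarrow>
        ccomp C g f \<in> carr C \<and> cdom C (ccomp C g f) = cdom C f \<and> ccod C (ccomp C g f) = ccod C g)
   \<and> (\<forall>f\<in>carr C. \<forall>g\<in>carr C. \<forall>h\<in>carr C. ccod C f = cdom C g \<longrightarrow> ccod C g = cdom C h \<longrightarrow>
        ccomp C h (ccomp C g f) = ccomp C (ccomp C h g) f)
   \<and> (\<forall>f\<in>carr C. ccomp C (cid C (ccod C f)) f = f \<and> ccomp C f (cid C (cdom C f)) = f)"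

definition is_iso :: "('o, 'm) cat \<Rightarrow> 'm \<Rightarrow> bool" where
  "is_iso C m \<longleftrightarrow> m \<in> carr C \<and> (\<exists>n\<in>carr C. cdom C n = ccod C m \<and> ccod C n = cdom C m
      \<and> ccomp C n m = cid C (cdom C m) \<and> ccomp C m n = cid C (ccod C m))"

definition atomic :: "('o, 'm) cat \<Rightarrow> bool" where
  "atomic C \<longleftrightarrow> (\<forall>m\<in>carr C. (\<exists>s\<in>carr C. cdom C s = ccod C m \<and> ccod C s = cdom C m
      \<and> ccomp C m s = cid C (ccod C m)) \<longrightarrow> is_iso C m)"

text \<open>By the Yoneda lemma, the full subcategory of presheaves on finite coproducts of
representables is (isomorphic to) the following: an object is a finite list of objects
[a_0,...,a_(n-1)] (standing for the coproduct of the representables), and a morphism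
from xs to ys is a list assigning to each i < length xs an index j < length ys together
with a morphism xs!i \<rightarrow> ys!j of T.\<close>

definition fobj :: "('o, 'm) cat \<Rightarrow> 'o list \<Rightarrow> bool" where
  "fobj C xs \<longleftrightarrow> set xs \<subseteq> cobj C"

definition fhom :: "('o, 'm) cat \<Rightarrow> 'o list \<Rightarrow> 'o list \<Rightarrow> (nat \<times> 'm) list \<Rightarrow> bool" where
  "fhom C xs ys f \<longleftrightarrow> length f = length xs \<and>
     (\<forall>i<length xs. fst (f!i) < length ys \<and> snd (f!i) \<in> carr C
        \<and> cdom C (snd (f!i)) = xs!i \<and> ccod C (snd (f!i)) = ys ! fst (f!i))"

definition fcomp :: "('o, 'm) cat \<Rightarrow> (nat \<times> 'm) list \<Rightarrow> (nat \<times> 'm) list \<Rightarrow> (nat \<times> 'm) list" where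
  "fcomp C g f = map (\<lambda>(j, m). (fst (g!j), ccomp C (snd (g!j)) m)) f"

definition fid :: "('o, 'm) cat \<Rightarrow> 'o list \<Rightarrow> (nat \<times> 'm) list" where
  "fid C xs = map (\<lambda>i. (i, cid C (xs!i))) [0..<length xs]"

definition fpullback ::
  "('o, 'm) cat \<Rightarrow> 'o list \<Rightarrow> 'o list \<Rightarrow> 'o list \<Rightarrow> (nat \<times> 'm) list \<Rightarrow> (nat \<times> 'm) list
   \<Rightarrow> 'o list \<Rightarrow> (nat \<times> 'm) list \<Rightarrow> (nat \<times> 'm) list \<Rightarrow> bool" where
  "fpullback C xs ys zs f g P p1 p2 \<longleftrightarrow>
     fobj C P \<and> fhom C P xs p1 \<and> fhom C P ys p2 \<and> fcomp C f p1 = fcomp C g p2 \<and>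
     (\<forall>Q q1 q2. fobj C Q \<and> fhom C Q xs q1 \<and> fhom C Q ys q2 \<and> fcomp C f q1 = fcomp C g q2 \<longrightarrow>
        (\<exists>!h. fhom C Q P h \<and> fcomp C p1 h = q1 \<and> fcomp C p2 h = q2))"

definition orbital :: "('o, 'm) cat \<Rightarrow> bool" where
  "orbital C \<longleftrightarrow> (\<forall>xs ys zs f g. fobj C xs \<and> fobj C ys \<and> fobj C zs \<and> fhom C xs zs f \<and> fhom C ys zs g
      \<longrightarrow> (\<exists>P p1 p2. fpullback C xs ys zs f g P p1 p2))"

text \<open>An object of F_V = F_T/V is a pair (xs, ms): a list of orbits xs together with
structure maps ms!i : xs!i \<rightarrow> V (this is a morphism xs \<rightarrow> [V] of F_T).\<close>

type_synonym ('o, 'm) vset = "'o list \<times> 'm list"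

definition tomor :: "'m list \<Rightarrow> (nat \<times> 'm) list" where
  "tomor ms = map (Pair 0) ms"

definition vobj :: "('o, 'm) cat \<Rightarrow> 'o \<Rightarrow> ('o, 'm) vset \<Rightarrow> bool" where
  "vobj C V S \<longleftrightarrow> V \<in> cobj C \<and> fobj C (fst S) \<and> fhom C (fst S) [V] (tomor (snd S))"

definition viso :: "('o, 'm) cat \<Rightarrow> 'o \<Rightarrow> ('o, 'm) vset \<Rightarrow> ('o, 'm) vset \<Rightarrow> bool" where
  "viso C V S S' \<longleftrightarrow> vobj C V S \<and> vobj C V S' \<and>
     (\<exists>h h'. fhom C (fst S) (fst S') h \<and> fhom C (fst S') (fst S) h'
        \<and> fcomp C h' h = fid C (fst S) \<and> fcomp C h h' = fid C (fst S')
        \<and> fcomp C (tomor (snd S')) h = tomor (snd S))"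

definition vstar :: "('o, 'm) cat \<Rightarrow> 'o \<Rightarrow> ('o, 'm) vset" where
  "vstar C V = ([V], [cid C V])"

definition vunion :: "('o, 'm) vset \<Rightarrow> ('o, 'm) vset \<Rightarrow> ('o, 'm) vset" where
  "vunion S S' = (fst S @ fst S', snd S @ snd S')"

definition is_restriction :: "('o, 'm) cat \<Rightarrow> 'm \<Rightarrow> ('o, 'm) vset \<Rightarrow> ('o, 'm) vset \<Rightarrow> bool" where
  "is_restriction C u S R \<longleftrightarrow>
     (\<exists>p1 p2. fpullback C (fst S) [cdom C u] [ccod C u] (tomor (snd S)) [(0, u)] (fst R) p1 p2
        \<and> p2 = tomor (snd R))"

definition vind :: "('o, 'm) cat \<Rightarrow> 'm \<Rightarrow> ('o, 'm) vset \<Rightarrow> ('o, 'm) vset" where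
  "vind C u T = (fst T, map (ccomp C u) (snd T))"

text \<open>For S in F_V with orbits U_i = (fst S)!i (structure map (snd S)!i) and T_i in F_(U_i),
the V-set coprod over i of Ind_(U_i)^V T_i.\<close>
definition vcoprod :: "('o, 'm) cat \<Rightarrow> ('o, 'm) vset \<Rightarrow> (nat \<Rightarrow> ('o, 'm) vset) \<Rightarrow> ('o, 'm) vset" where
  "vcoprod C S T =
     (concat (map (\<lambda>i. fst (vind C (snd S ! i) (T i))) [0..<length (fst S)]),
      concat (map (\<lambda>i. snd (vind C (snd S ! i) (T i))) [0..<length (fst S)]))"

type_synonym ('o, 'm) tcoll = "'o \<Rightarrow> ('o, 'm) vset \<Rightarrow> bool"

definition full_tsubcat :: "('o, 'm) cat \<Rightarrow> ('o, 'm) tcoll \<Rightarrow> bool" where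
  "full_tsubcat C \<C> \<longleftrightarrow>
     (\<forall>V S. \<C> V S \<longrightarrow> vobj C V S)
   \<and> (\<forall>V S S'. \<C> V S \<and> viso C V S S' \<longrightarrow> \<C> V S')
   \<and> (\<forall>u S R. u \<in> carr C \<and> \<C> (ccod C u) S \<and> is_restriction C u S R \<longrightarrow> \<C> (cdom C u) R)"

definition weak_indexing_system :: "('o, 'm) cat \<Rightarrow> ('o, 'm) tcoll \<Rightarrow> bool" where
  "weak_indexing_system C \<C> \<longleftrightarrow>
     full_tsubcat C \<C>
   \<and> (\<forall>V. (\<exists>S. \<C> V S) \<longrightarrow> \<C> V (vstar C V))
   \<and> (\<forall>V S T. \<C> V S \<and> (\<forall>i<length (fst S). \<C> (fst S ! i) (T i)) \<longrightarrow> \<C> V (vcoprod C S T))"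

definition almost_essentially_unital :: "('o, 'm) cat \<Rightarrow> ('o, 'm) tcoll \<Rightarrow> bool" where
  "almost_essentially_unital C \<C> \<longleftrightarrow>
     (\<forall>V S S'. vobj C V S \<and> vobj C V S' \<and> \<C> V (vunion S S') \<and> \<not> viso C V (vunion S S') (vstar C V)
        \<longrightarrow> \<C> V S \<and> \<C> V S')"

definition wis_closure :: "('o, 'm) cat \<Rightarrow> ('o, 'm) tcoll \<Rightarrow> ('o, 'm) tcoll" where
  "wis_closure C D = (\<lambda>V S. \<forall>\<C>'. weak_indexing_system C \<C>' \<and> (\<forall>W R. D W R \<longrightarrow> \<C>' W R) \<longrightarrow> \<C>' V S)"

text \<open>A V-set is sparse if it is (isomorphic to) eps * V \<squnion> W_1 \<squnion> ... \<squnion> W_n, with orbits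
W_i = (W_i, w_i : W_i \<rightarrow> V) in T/V and no map W_i \<rightarrow> W_j in T/V for i \<noteq> j.\<close>
definition sparse :: "('o, 'm) cat \<Rightarrow> 'o \<Rightarrow> ('o, 'm) vset \<Rightarrow> bool" where
  "sparse C V S \<longleftrightarrow> vobj C V S \<and>
     (\<exists>(eps::bool) (Ws :: ('o \<times> 'm) list).
        (\<forall>k<length Ws. fst (Ws!k) \<in> cobj C \<and> snd (Ws!k) \<in> carr C
            \<and> cdom C (snd (Ws!k)) = fst (Ws!k) \<and> ccod C (snd (Ws!k)) = V)
      \<and> (\<forall>i<length Ws. \<forall>j<length Ws. i \<noteq> j \<longrightarrow>
            \<not> (\<exists>m\<in>carr C. cdom C m = fst (Ws!i) \<and> ccod C m = fst (Ws!j)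
                  \<and> ccomp C (snd (Ws!j)) m = snd (Ws!i)))
      \<and> viso C V S (vunion (if eps then vstar C V else ([], [])) (map fst Ws, map snd Ws)))"

definition sparse_part :: "('o, 'm) cat \<Rightarrow> ('o, 'm) tcoll \<Rightarrow> ('o, 'm) tcoll" where
  "sparse_part C \<C> = (\<lambda>V S. \<C> V S \<and> sparse C V S)"

end

theory Submission
  imports Defs
begin


lemma vobj_iff: "vobj C V (xs,ms) \<longleftrightarrow> V \<in> cobj C \<and> set xs \<subseteq> cobj C \<and> length ms = length xs \<and>
   (\<forall>i<length xs. ms!i \<in> carr C \<and> cdom C (ms!i) = xs!i \<and> ccod C (ms!i) = V)"
  unfolding vobj_def fobj_def fhom_def tomor_def by auto

lemma catD:
  assumes "is_cat C"
  shows "\<And>f. f \<in> carr C \<Longrightarrow> cdom C f \<in> cobj C \<and> ccod C f \<in> cobj C"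
    and "\<And>a. a \<in> cobj C \<Longrightarrow> cid C a \<in> carr C \<and> cdom C (cid C a) = a \<and> ccod C (cid C a) = a"
    and "\<And>f g. f \<in> carr C \<Longrightarrow> g \<in> carr C \<Longrightarrow> ccod C f = cdom C g \<Longrightarrow>
        ccomp C g f \<in> carr C \<and> cdom C (ccomp C g f) = cdom C f \<and> ccod C (ccomp C g f) = ccod C g"
    and "\<And>f g h. f \<in> carr C \<Longrightarrow> g \<in> carr C \<Longrightarrow> h \<in> carr C \<Longrightarrow> ccod C f = cdom C g \<Longrightarrow> ccod C g = cdom C h \<Longrightarrow>
        ccomp C h (ccomp C g f) = ccomp C (ccomp C h g) f"
    and "\<And>f. f \<in> carr C \<Longrightarrow> ccomp C (cid C (ccod C f)) f = f"
    and "\<And>f. f \<in> carr C \<Longrightarrow> ccomp C f (cid C (cdom C f)) = f"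
  using assms unfolding is_cat_def by blast+

lemma viso_perm:
  assumes "vobj C V (xs,ms)" "vobj C V (ys,ns)" "length xs = n" "length ys = n"
  and rq: "\<And>p. p<n \<Longrightarrow> r p < n \<and> q (r p) = p" "\<And>k. k<n \<Longrightarrow> q k < n \<and> r (q k) = k"
  and g: "\<And>p. p<n \<Longrightarrow> g p \<in> carr C \<and> gi p \<in> carr C \<and> cdom C (g p) = ys!p \<and> ccod C (g p) = xs!(r p)
     \<and> cdom C (gi p) = xs!(r p) \<and> ccod C (gi p) = ys!p \<and> ccomp C (g p) (gi p) = cid C (xs!(r p))
     \<and> ccomp C (gi p) (g p) = cid C (ys!p) \<and> ccomp C (ms!(r p)) (g p) = ns!p"
  shows "viso C V (ys,ns) (xs,ms)"
proof -
  define h where "h = map (\<lambda>p. (r p, g p)) [0..<n]"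
  define h' where "h' = map (\<lambda>k. (q k, gi (q k))) [0..<n]"
  have lm: "length ms = n" "length ns = n" using assms(1,2,3,4) by (auto simp: vobj_iff)
  have 1: "fhom C ys xs h" unfolding fhom_def h_def using assms(3,4) rq g by auto
  have 2: "fhom C xs ys h'"
  proof -
    have "\<forall>k<n. q k < n \<and> gi (q k) \<in> carr C \<and> cdom C (gi (q k)) = xs ! k \<and> ccod C (gi (q k)) = ys ! q k"
    proof (intro allI impI)
      fix k assume k: "k < n"
      show "q k < n \<and> gi (q k) \<in> carr C \<and> cdom C (gi (q k)) = xs ! k \<and> ccod C (gi (q k)) = ys ! q k"
        using rq(2)[OF k] g[of "q k"] by auto
    qed
    then show ?thesis unfolding fhom_def h'_def using assms(3,4) by auto
  qed
  have 3: "fcomp C h' h = fid C ys"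
    by (rule nth_equalityI) (auto simp: fcomp_def fid_def h_def h'_def assms(4) rq g)
  have 4: "fcomp C h h' = fid C xs"
    by (rule nth_equalityI) (auto simp: fcomp_def fid_def h_def h'_def assms(3) rq g)
  have 5: "fcomp C (tomor ms) h = tomor ns"
    by (rule nth_equalityI) (auto simp: fcomp_def tomor_def h_def lm rq g)
  show ?thesis unfolding viso_def using assms(1,2) 1 2 3 4 5 by auto
qed

lemma viso_perm_sym:
  assumes cat: "is_cat C" and "vobj C V (xs,ms)" "vobj C V (ys,ns)" "length xs = n" "length ys = n"
  and rq: "\<And>p. p<n \<Longrightarrow> r p < n \<and> q (r p) = p" "\<And>k. k<n \<Longrightarrow> q k < n \<and> r (q k) = k"
  and g: "\<And>p. p<n \<Longrightarrow> g p \<in> carr C \<and> gi p \<in> carr C \<and> cdom C (g p) = ys!p \<and> ccod C (g p) = xs!(r p)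
     \<and> cdom C (gi p) = xs!(r p) \<and> ccod C (gi p) = ys!p \<and> ccomp C (g p) (gi p) = cid C (xs!(r p))
     \<and> ccomp C (gi p) (g p) = cid C (ys!p) \<and> ccomp C (ms!(r p)) (g p) = ns!p"
  shows "viso C V (xs,ms) (ys,ns)"
proof (rule viso_perm[where r=q and q=r and g="\<lambda>k. gi (q k)" and gi="\<lambda>k. g (q k)" and n=n])
  show "vobj C V (ys, ns)" "vobj C V (xs, ms)" "length ys = n" "length xs = n" by fact+
  show "\<And>p. p < n \<Longrightarrow> q p < n \<and> r (q p) = p" "\<And>k. k < n \<Longrightarrow> r k < n \<and> q (r k) = k" using rq by auto
  fix k assume k: "k < n"
  have qk: "q k < n" "r (q k) = k" using rq k by auto
  note gk = g[OF qk(1), unfolded qk(2)]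
  have ms: "ms!k \<in> carr C" "cdom C (ms!k) = xs!k" using assms(2) k assms(4) by (auto simp: vobj_iff)
  have "ccomp C (ns ! q k) (gi (q k)) = ccomp C (ccomp C (ms!k) (g (q k))) (gi (q k))" using gk by simp
  also have "\<dots> = ccomp C (ms!k) (ccomp C (g (q k)) (gi (q k)))"
    using catD(4)[OF cat, of "gi (q k)" "g (q k)" "ms!k"] gk ms by auto
  also have "\<dots> = ms!k" using gk ms catD(6)[OF cat, of "ms!k"] by auto
  finally show "gi (q k) \<in> carr C \<and> g (q k) \<in> carr C \<and> cdom C (gi (q k)) = xs ! k \<and> ccod C (gi (q k)) = ys ! q k \<and>
         cdom C (g (q k)) = ys ! q k \<and> ccod C (g (q k)) = xs ! k \<and> ccomp C (gi (q k)) (g (q k)) = cid C (ys ! q k) \<and>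
         ccomp C (g (q k)) (gi (q k)) = cid C (xs ! k) \<and> ccomp C (ns ! q k) (gi (q k)) = ms ! k"
    using gk by auto
qed

lemma perm_list:
  assumes cat: "is_cat C" and v: "vobj C V (xs,ms)" and d: "distinct L" and sL: "set L = {..<length xs}"
  shows "viso C V (map (nth xs) L, map (nth ms) L) (xs,ms)" "viso C V (xs,ms) (map (nth xs) L, map (nth ms) L)"
    "vobj C V (map (nth xs) L, map (nth ms) L)"
proof -
  define n where "n = length xs"
  have lL: "length L = n" using distinct_card[OF d] sL n_def by simp
  have "\<forall>k. \<exists>p. k < n \<longrightarrow> p < n \<and> L!p = k"
  proof
    fix k show "\<exists>p. k<n \<longrightarrow> p<n \<and> L!p = k"
    proof (cases "k<n")
      case True then have "k \<in> set L" using sL n_def by auto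
      then obtain p where "p < length L" "L!p = k" by (auto simp: in_set_conv_nth)
      then show ?thesis using lL by auto
    qed auto
  qed
  from choice[OF this] obtain q where q0: "\<forall>k. k < n \<longrightarrow> q k < n \<and> L!(q k) = k" by blast
  have q: "\<And>k. k < n \<Longrightarrow> q k < n \<and> L!(q k) = k" using q0 by blast
  have Ln: "\<And>p. p < n \<Longrightarrow> L!p < n" using sL lL n_def nth_mem by fastforce
  have rq: "L!p < n \<and> q (L!p) = p" if p: "p<n" for p
  proof -
    have "L!p < n" using Ln p by blast
    then have "q (L!p) < n" "L!(q (L!p)) = L!p" using q by auto
    then show ?thesis using nth_eq_iff_index_eq[OF d, of "q (L!p)" p] p lL \<open>L!p < n\<close> by auto
  qed
  have lm: "length ms = n" using v n_def by (simp add: vobj_iff)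
  have vo: "\<And>i. i < n \<Longrightarrow> ms!i \<in> carr C \<and> cdom C (ms!i) = xs!i \<and> ccod C (ms!i) = V \<and> xs!i \<in> cobj C"
    using v n_def by (auto simp: vobj_iff)
  show v2: "vobj C V (map (nth xs) L, map (nth ms) L)" using v Ln lL lm vo sL by (auto simp: vobj_iff n_def)
  have g: "\<And>p. p<n \<Longrightarrow> cid C (xs ! (L!p)) \<in> carr C \<and> cid C (xs ! (L!p)) \<in> carr C
     \<and> cdom C (cid C (xs ! (L!p))) = (map (nth xs) L)!p \<and> ccod C (cid C (xs ! (L!p))) = xs!(L!p)
     \<and> cdom C (cid C (xs ! (L!p))) = xs!(L!p) \<and> ccod C (cid C (xs ! (L!p))) = (map (nth xs) L)!p
     \<and> ccomp C (cid C (xs ! (L!p))) (cid C (xs ! (L!p))) = cid C (xs!(L!p))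
     \<and> ccomp C (cid C (xs ! (L!p))) (cid C (xs ! (L!p))) = cid C ((map (nth xs) L)!p)
     \<and> ccomp C (ms!(L!p)) (cid C (xs ! (L!p))) = (map (nth ms) L)!p"
  proof -
    fix p assume p: "p < n"
    have a: "xs!(L!p) \<in> cobj C" "ms!(L!p) \<in> carr C" "cdom C (ms!(L!p)) = xs!(L!p)" using vo Ln p by auto
    show "?thesis p" using catD(2)[OF cat a(1)] catD(6)[OF cat a(2)] catD(5)[OF cat, of "cid C (xs ! (L!p))"] a p lL by auto
  qed
  show "viso C V (map (nth xs) L, map (nth ms) L) (xs,ms)"
    by (rule viso_perm[OF v v2 n_def[symmetric] _ rq q g]) (simp add: lL)
  show "viso C V (xs,ms) (map (nth xs) L, map (nth ms) L)"
    by (rule viso_perm_sym[OF cat v v2 n_def[symmetric] _ rq q g]) (simp add: lL)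
qed

lemma viso_refl:
  assumes cat: "is_cat C" and v: "vobj C V (xs,ms)"
  shows "viso C V (xs,ms) (xs,ms)"
proof -
  have lm: "length ms = length xs" using v by (simp add: vobj_iff)
  have "map (nth xs) [0..<length xs] = xs" "map (nth ms) [0..<length xs] = ms"
    by (auto intro: nth_equalityI simp: lm)
  then show ?thesis using perm_list(1)[OF cat v, of "[0..<length xs]"] by (simp add: atLeast0LessThan)
qed

lemma viso_vstar_len:
  assumes "viso C V A (vstar C V)" shows "length (fst A) \<le> 1"
proof (rule ccontr)
  assume l: "\<not> length (fst A) \<le> 1"
  from assms obtain h h' where h: "fhom C (fst A) [V] h" and e: "fcomp C h' h = fid C (fst A)"
    unfolding viso_def vstar_def by auto
  have l0: "0 < length (fst A)" "1 < length (fst A)" using l by auto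
  have "fst (h!0) = 0" "fst (h!1) = 0" using h l0 unfolding fhom_def by auto
  moreover have "fst (fcomp C h' h ! 0) = 0" "fst (fcomp C h' h ! 1) = 1" using e l0 by (auto simp: fid_def)
  moreover have "fst (fcomp C h' h ! k) = fst (h' ! fst (h!k))" if "k < length h" for k
    using that by (simp add: fcomp_def split: prod.split)
  moreover have "length h = length (fst A)" using h by (simp add: fhom_def)
  ultimately show False using l0 by simp
qed

lemma pullback_restr:
  assumes cat: "is_cat C" and orb: "orbital C" and v: "vobj C V (xs,ms)" and u: "u \<in> carr C" "ccod C u = V"
  shows "\<exists>P p1 p2. fpullback C xs [cdom C u] [V] (tomor ms) [(0,u)] P p1 p2 \<and> is_restriction C u (xs,ms) (P, map snd p2)"
proof -
  have "fobj C xs" "fhom C xs [V] (tomor ms)" "V \<in> cobj C" using v by (auto simp: vobj_def)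
  moreover have "fobj C [cdom C u]" "fobj C [V]" using catD(1)[OF cat u(1)] u(2) \<open>V \<in> cobj C\<close> by (auto simp: fobj_def)
  moreover have "fhom C [cdom C u] [V] [(0,u)]" using u by (simp add: fhom_def)
  ultimately obtain P p1 p2 where pb: "fpullback C xs [cdom C u] [V] (tomor ms) [(0,u)] P p1 p2"
    using orb unfolding orbital_def by blast
  then have "fhom C P [cdom C u] p2" by (simp add: fpullback_def)
  then have "p2 = tomor (map snd p2)" unfolding fhom_def tomor_def
    by (intro nth_equalityI) (auto simp: prod_eq_iff)
  then have "is_restriction C u (xs,ms) (P, map snd p2)" using pb u unfolding is_restriction_def by auto
  then show ?thesis using pb by blast
qed

lemma wis_unit_restr:
  assumes cat: "is_cat C" and orb: "orbital C" and w: "weak_indexing_system C D" and d: "D V (xs,ms)"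
    and u: "u \<in> carr C" "ccod C u = V"
  shows "D (cdom C u) (vstar C (cdom C u))"
proof -
  have v: "vobj C V (xs,ms)" using w d by (simp add: weak_indexing_system_def full_tsubcat_def)
  obtain R where "is_restriction C u (xs,ms) R" using pullback_restr[OF cat orb v u] by blast
  moreover have "\<forall>u S R. u \<in> carr C \<and> D (ccod C u) S \<and> is_restriction C u S R \<longrightarrow> D (cdom C u) R"
    using w unfolding weak_indexing_system_def full_tsubcat_def by blast
  ultimately have "D (cdom C u) R" using d u by blast
  then show ?thesis using w unfolding weak_indexing_system_def by blast
qed


lemma vobj_sub:
  assumes v: "vobj C V (xs,ms)" and sL: "set L \<subseteq> {..<length xs}"
  shows "vobj C V (map (nth xs) L, map (nth ms) L)"
  using assms by (auto simp: vobj_iff subset_iff)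

lemma atomic_inv:
  assumes cat: "is_cat C" and atm: "atomic C" and p: "p \<in> carr C" and g: "g \<in> carr C"
    and "cdom C g = ccod C p" "ccod C g = cdom C p" "ccomp C p g = cid C (ccod C p)"
  shows "ccomp C g p = cid C (cdom C p)"
proof -
  have "is_iso C p" using atm p g assms unfolding atomic_def by blast
  then obtain k where k: "k \<in> carr C" "cdom C k = ccod C p" "ccod C k = cdom C p"
    "ccomp C k p = cid C (cdom C p)" "ccomp C p k = cid C (ccod C p)" unfolding is_iso_def by blast
  have "k = ccomp C k (cid C (ccod C p))" using catD(6)[OF cat k(1)] k by simp
  also have "\<dots> = ccomp C k (ccomp C p g)" using assms by simp
  also have "\<dots> = ccomp C (ccomp C k p) g" using catD(4)[OF cat g p k(1)] assms k by simp
  also have "\<dots> = g" using k catD(5)[OF cat g] assms by simp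
  finally show ?thesis using k by simp
qed

lemma pb_point:
  assumes cat: "is_cat C" and pb: "fpullback C xs [cdom C u] [V] (tomor ms) [(0,u)] P p1 p2"
    and v: "vobj C V (xs,ms)" and k: "k < length xs" and w: "w \<in> carr C" "cdom C w = xs!k" "ccod C w = cdom C u"
    and u: "u \<in> carr C" "ccod C u = V" and e: "ccomp C u w = ms!k"
  shows "\<exists>a g. a < length P \<and> g \<in> carr C \<and> cdom C g = xs!k \<and> ccod C g = P!a \<and> fst (p1!a) = k
     \<and> ccomp C (snd (p1!a)) g = cid C (xs!k) \<and> ccomp C (snd (p2!a)) g = w"
proof -
  have vk: "ms!k \<in> carr C" "cdom C (ms!k) = xs!k" "xs!k \<in> cobj C" "length ms = length xs" using v k by (auto simp: vobj_iff)
  have 1: "fobj C [xs!k]" using vk by (simp add: fobj_def)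
  have 2: "fhom C [xs!k] xs [(k, cid C (xs!k))]" using k catD(2)[OF cat vk(3)] by (simp add: fhom_def)
  have 3: "fhom C [xs!k] [cdom C u] [(0, w)]" using w by (simp add: fhom_def)
  have 4: "fcomp C (tomor ms) [(k, cid C (xs!k))] = fcomp C [(0,u)] [(0, w)]"
    using k vk catD(6)[OF cat vk(1)] e by (simp add: fcomp_def tomor_def)
  obtain h where h: "fhom C [xs!k] P h" "fcomp C p1 h = [(k, cid C (xs!k))]" "fcomp C p2 h = [(0, w)]"
    using pb 1 2 3 4 unfolding fpullback_def by blast
  have "length h = 1" using h(1) by (simp add: fhom_def)
  then obtain x where "h = [x]" by (auto simp: length_Suc_conv)
  moreover obtain a g where "x = (a,g)" by (cases x)
  ultimately have hf: "h = [(a,g)]" by simp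
  have "a < length P \<and> g \<in> carr C \<and> cdom C g = xs!k \<and> ccod C g = P!a"
    using h(1) hf unfolding fhom_def by auto
  moreover have "fst (p1!a) = k \<and> ccomp C (snd (p1!a)) g = cid C (xs!k)"
    using h(2) hf by (simp add: fcomp_def)
  moreover have "ccomp C (snd (p2!a)) g = w"
    using h(3) hf by (simp add: fcomp_def)
  ultimately show ?thesis by blast
qed

lemma concat_single: "concat (map (\<lambda>k. [f k]) ks) = map f ks" by (induction ks) auto

lemma map_nth_comp: "map (\<lambda>k. f (L!k)) [0..<length L] = map f L"
  by (rule nth_equalityI) auto



lemma step:
  assumes cat: "is_cat T" and orb: "orbital T" and atm: "atomic T"
    and wD: "weak_indexing_system T D" and aD: "almost_essentially_unital T D"
    and wD': "weak_indexing_system T D'" and sub: "\<And>W R. sparse_part T D W R \<Longrightarrow> D' W R"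
    and S: "D V (xs,ms)" and n: "n = length xs" and ij: "i < n" "j < n" "i \<noteq> j"
    and m: "m \<in> carr T" "cdom T m = xs!i" "ccod T m = xs!j" "ccomp T (ms!j) m = ms!i"
    and IH: "\<And>S'. length (fst S') < n \<Longrightarrow> D V S' \<Longrightarrow> D' V S'"
  shows "D' V (xs,ms)"
proof -
  have isoD: "\<And>V S S'. D V S \<Longrightarrow> viso T V S S' \<Longrightarrow> D V S'"
    using wD unfolding weak_indexing_system_def full_tsubcat_def by blast
  have isoD': "\<And>V S S'. D' V S \<Longrightarrow> viso T V S S' \<Longrightarrow> D' V S'"
    using wD' unfolding weak_indexing_system_def full_tsubcat_def by blast
  have objD: "\<And>V S. D V S \<Longrightarrow> vobj T V S"
    using wD unfolding weak_indexing_system_def full_tsubcat_def by blast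
  have resD: "\<And>u S R. u \<in> carr T \<Longrightarrow> D (ccod T u) S \<Longrightarrow> is_restriction T u S R \<Longrightarrow> D (cdom T u) R"
    using wD unfolding weak_indexing_system_def full_tsubcat_def by blast
  have aeu: "\<And>V S S'. vobj T V S \<Longrightarrow> vobj T V S' \<Longrightarrow> D V (vunion S S') \<Longrightarrow> \<not> viso T V (vunion S S') (vstar T V)
        \<Longrightarrow> D V S \<and> D V S'"
    using aD unfolding almost_essentially_unital_def by blast
  have v: "vobj T V (xs,ms)" using objD S by blast
  have lm: "length ms = n" using v n by (simp add: vobj_iff)
  have vo: "\<And>k. k < n \<Longrightarrow> ms!k \<in> carr T \<and> cdom T (ms!k) = xs!k \<and> ccod T (ms!k) = V \<and> xs!k \<in> cobj T"
    using v n by (auto simp: vobj_iff)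
  define Lr where "Lr = filter (\<lambda>k. k \<noteq> i \<and> k \<noteq> j) [0..<n]"
  define S1 where "S1 = (map (nth xs) (j # Lr), map (nth ms) (j # Lr))"
  define L1 where "L1 = j # Lr @ [i]"
  have dL1: "distinct L1" using ij unfolding L1_def Lr_def by auto
  have sL1: "set L1 = {..<length xs}" using ij n unfolding L1_def Lr_def by auto
  have lL1: "length L1 = n" using distinct_card[OF dL1] sL1 n by simp
  have un1: "vunion S1 ([xs!i],[ms!i]) = (map (nth xs) L1, map (nth ms) L1)"
    by (simp add: vunion_def S1_def L1_def)
  have D1: "D V (vunion S1 ([xs!i],[ms!i]))" using isoD[OF S perm_list(2)[OF cat v dL1 sL1]] un1 by simp
  have "set (j # Lr) \<subseteq> {..<length xs}" using sL1 unfolding L1_def by auto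
  then have vS1: "vobj T V S1" unfolding S1_def using vobj_sub[OF v, of "j # Lr"] by simp
  have vWi: "vobj T V ([xs!i],[ms!i])" using vobj_sub[OF v, of "[i]"] ij n by auto
  have nst1: "\<not> viso T V (vunion S1 ([xs!i],[ms!i])) (vstar T V)"
    using viso_vstar_len un1 lL1 ij by fastforce
  have DS1: "D V S1" using aeu[OF vS1 vWi D1 nst1] by blast
  have lS1: "length (fst S1) = n - 1" using lL1 unfolding S1_def L1_def by simp
  have D'S1: "D' V S1" using IH[OF _ DS1] lS1 ij by simp
  define u where "u = ms!j"
  have u: "u \<in> carr T" "ccod T u = V" "cdom T u = xs!j" using vo[OF ij(2)] u_def by auto
  obtain P p1 p2 where pb: "fpullback T xs [cdom T u] [V] (tomor ms) [(0,u)] P p1 p2"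
      and rs: "is_restriction T u (xs,ms) (P, map snd p2)"
    using pullback_restr[OF cat orb v u(1,2)] by blast
  define sP where "sP = map snd p2"
  have DR: "D (xs!j) (P, sP)" using resD[OF u(1) _ rs] S u sP_def by simp
  have vR: "vobj T (xs!j) (P, sP)" using objD[OF DR] .
  have hp1: "fhom T P xs p1" and hp2: "fhom T P [cdom T u] p2" using pb by (auto simp: fpullback_def)
  obtain a ga where a: "a < length P" "ga \<in> carr T" "cdom T ga = xs!i" "ccod T ga = P!a" "fst (p1!a) = i"
     "ccomp T (snd (p1!a)) ga = cid T (xs!i)" "ccomp T (snd (p2!a)) ga = m"
    using pb_point[OF cat pb v _ m(1,2) _ u(1,2)] ij n m u u_def by auto
  have xjo: "xs!j \<in> cobj T" using vo ij by auto
  obtain b gb where b: "b < length P" "gb \<in> carr T" "cdom T gb = xs!j" "ccod T gb = P!b" "fst (p1!b) = j"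
     "ccomp T (snd (p1!b)) gb = cid T (xs!j)" "ccomp T (snd (p2!b)) gb = cid T (xs!j)"
    using pb_point[OF cat pb v, where k=j and w="cid T (xs!j)"] ij n u catD(2)[OF cat xjo]
      catD(6)[OF cat u(1)] u_def by auto
  have ab: "a \<noteq> b" using a(5) b(5) ij by auto
  define pa where "pa = snd (p1!a)"
  define pb' where "pb' = snd (p1!b)"
  define sa where "sa = sP!a"
  define sb where "sb = sP!b"
  have pa: "pa \<in> carr T" "cdom T pa = P!a" "ccod T pa = xs!i" using hp1 a unfolding fhom_def pa_def by auto
  have pb': "pb' \<in> carr T" "cdom T pb' = P!b" "ccod T pb' = xs!j" using hp1 b unfolding fhom_def pb'_def by auto
  have lp2: "length p2 = length P" using hp2 by (simp add: fhom_def)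
  have sa: "sa \<in> carr T" "cdom T sa = P!a" "ccod T sa = xs!j" using hp2 a lp2 u unfolding fhom_def sa_def sP_def by auto
  have sb: "sb \<in> carr T" "cdom T sb = P!b" "ccod T sb = xs!j" using hp2 b lp2 u unfolding fhom_def sb_def sP_def by auto
  have sa_ga: "ccomp T sa ga = m" using a lp2 by (simp add: sa_def sP_def)
  have sb_gb: "ccomp T sb gb = cid T (xs!j)" using b lp2 by (simp add: sb_def sP_def)
  have pa_ga: "ccomp T pa ga = cid T (xs!i)" using a pa_def by simp
  have pb_gb: "ccomp T pb' gb = cid T (xs!j)" using b pb'_def by simp
  have ga_pa: "ccomp T ga pa = cid T (P!a)" using atomic_inv[OF cat atm pa(1) a(2)] pa a pa_ga by simp
  have gb_pb: "ccomp T gb pb' = cid T (P!b)" using atomic_inv[OF cat atm pb'(1) b(2)] pb' b pb_gb by simp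
  have Pa: "P!a \<in> cobj T" "P!b \<in> cobj T" using catD(1)[OF cat pa(1)] catD(1)[OF cat pb'(1)] pa pb' by auto
  have sb_pb: "sb = pb'"
  proof -
    have "sb = ccomp T sb (cid T (P!b))" using catD(6)[OF cat sb(1)] sb by simp
    also have "\<dots> = ccomp T sb (ccomp T gb pb')" using gb_pb by simp
    also have "\<dots> = ccomp T (ccomp T sb gb) pb'" using catD(4)[OF cat pb'(1) b(2) sb(1)] pb' b sb by simp
    also have "\<dots> = pb'" using sb_gb catD(5)[OF cat pb'(1)] pb' by simp
    finally show ?thesis .
  qed
  have m_pa: "ccomp T m pa = sa"
  proof -
    have "ccomp T m pa = ccomp T (ccomp T sa ga) pa" using sa_ga by simp
    also have "\<dots> = ccomp T sa (ccomp T ga pa)" using catD(4)[OF cat pa(1) a(2) sa(1)] pa a sa by simp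
    also have "\<dots> = sa" using ga_pa catD(6)[OF cat sa(1)] sa by simp
    finally show ?thesis .
  qed
  define LP where "LP = b # a # filter (\<lambda>k. k \<noteq> a \<and> k \<noteq> b) [0..<length P]"
  have dLP: "distinct LP" using ab unfolding LP_def by auto
  have sLP: "set LP = {..<length P}" using a b unfolding LP_def by auto
  have lLP: "length LP = length P" using distinct_card[OF dLP] sLP by simp
  define RR where "RR = (map (nth P) (filter (\<lambda>k. k \<noteq> a \<and> k \<noteq> b) [0..<length P]),
                         map (nth sP) (filter (\<lambda>k. k \<noteq> a \<and> k \<noteq> b) [0..<length P]))"
  have un2: "vunion ([P!b, P!a],[sb, sa]) RR = (map (nth P) LP, map (nth sP) LP)"
    by (simp add: vunion_def RR_def LP_def sa_def sb_def)
  have D2: "D (xs!j) (vunion ([P!b, P!a],[sb, sa]) RR)" using isoD[OF DR perm_list(2)[OF cat vR dLP sLP]] un2 by simp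
  have vAB: "vobj T (xs!j) ([P!b, P!a],[sb, sa])" using vobj_sub[OF vR, of "[b,a]"] a b by (auto simp: sa_def sb_def)
  have vRR: "vobj T (xs!j) RR" unfolding RR_def by (rule vobj_sub[OF vR]) auto
  have nst2: "\<not> viso T (xs!j) (vunion ([P!b, P!a],[sb, sa]) RR) (vstar T (xs!j))"
  proof
    assume "viso T (xs!j) (vunion ([P!b, P!a],[sb, sa]) RR) (vstar T (xs!j))"
    then have "length (fst (vunion ([P!b, P!a],[sb, sa]) RR)) \<le> 1" by (rule viso_vstar_len)
    then show False by (simp add: vunion_def)
  qed
  have DAB: "D (xs!j) ([P!b, P!a],[sb, sa])" using aeu[OF vAB vRR D2 nst2] by blast
  define T0 where "T0 = ([xs!j, xs!i], [cid T (xs!j), m])"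
  have xio: "xs!i \<in> cobj T" using vo ij by auto
  have vT0: "vobj T (xs!j) T0" unfolding T0_def vobj_iff using xjo xio m catD(2)[OF cat xjo] by (auto simp: less_Suc_eq)
  have "viso T (xs!j) ([P!b, P!a],[sb, sa]) T0" unfolding T0_def
  proof (rule viso_perm[where n=2 and r="\<lambda>p. p" and q="\<lambda>p. p" and g="\<lambda>p. if p = 0 then pb' else pa"
      and gi="\<lambda>p. if p = 0 then gb else ga"])
    show "vobj T (xs ! j) ([xs ! j, xs ! i], [cid T (xs ! j), m])" using vT0 T0_def by simp
    show "vobj T (xs ! j) ([P ! b, P ! a], [sb, sa])" by fact
    fix p assume "p < (2::nat)"
    then have "p = 0 \<or> p = 1" by auto
    then show "(if p = 0 then pb' else pa) \<in> carr T \<and> (if p = 0 then gb else ga) \<in> carr T \<and>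
         cdom T (if p = 0 then pb' else pa) = [P ! b, P ! a] ! p \<and> ccod T (if p = 0 then pb' else pa) = [xs ! j, xs ! i] ! p \<and>
         cdom T (if p = 0 then gb else ga) = [xs ! j, xs ! i] ! p \<and> ccod T (if p = 0 then gb else ga) = [P ! b, P ! a] ! p \<and>
         ccomp T (if p = 0 then pb' else pa) (if p = 0 then gb else ga) = cid T ([xs ! j, xs ! i] ! p) \<and>
         ccomp T (if p = 0 then gb else ga) (if p = 0 then pb' else pa) = cid T ([P ! b, P ! a] ! p) \<and>
         ccomp T ([cid T (xs ! j), m] ! p) (if p = 0 then pb' else pa) = [sb, sa] ! p"
      using pa pb' a b pa_ga pb_gb ga_pa gb_pb m_pa sb_pb catD(5)[OF cat pb'(1)] by auto
  qed auto
  then have DT0: "D (xs!j) T0" using isoD[OF DAB] by blast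
  have spT0: "sparse T (xs!j) T0" unfolding sparse_def
  proof (intro conjI exI)
    show "vobj T (xs!j) T0" by fact
    show "\<forall>k<length [(xs!i, m)]. fst ([(xs!i, m)]!k) \<in> cobj T \<and> snd ([(xs!i, m)]!k) \<in> carr T
            \<and> cdom T (snd ([(xs!i, m)]!k)) = fst ([(xs!i, m)]!k) \<and> ccod T (snd ([(xs!i, m)]!k)) = xs!j"
      using xio m by auto
    show "\<forall>i'<length [(xs!i, m)]. \<forall>j'<length [(xs!i, m)]. i' \<noteq> j' \<longrightarrow> \<not> (\<exists>m'\<in>carr T. cdom T m' = fst ([(xs!i, m)]!i') \<and> ccod T m' = fst ([(xs!i, m)]!j')
                  \<and> ccomp T (snd ([(xs!i, m)]!j')) m' = snd ([(xs!i, m)]!i'))" by auto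
    show "viso T (xs!j) T0 (vunion (if True then vstar T (xs!j) else ([], [])) (map fst [(xs!i, m)], map snd [(xs!i, m)]))"
      using viso_refl[OF cat, of "xs!j" "[xs!j, xs!i]" "[cid T (xs!j), m]"] vT0
      by (simp add: T0_def vunion_def vstar_def)
  qed
  have D'T0: "D' (xs!j) T0" using sub DT0 spT0 by (simp add: sparse_part_def)
  define Tf where "Tf = (\<lambda>k. if k = 0 then T0 else vstar T (fst S1 ! k))"
  have vS1': "vobj T V (fst S1, snd S1)" using vS1 by simp
  have D'S1': "D' V (fst S1, snd S1)" using D'S1 by simp
  have lsS1: "length (snd S1) = length (fst S1)" unfolding S1_def by simp
  have allT: "\<forall>k<length (fst S1). D' (fst S1 ! k) (Tf k)"
  proof (intro allI impI)
    fix k assume k: "k < length (fst S1)"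
    show "D' (fst S1 ! k) (Tf k)"
    proof (cases "k = 0")
      case True then show ?thesis using D'T0 by (simp add: Tf_def S1_def)
    next
      case False
      have "snd S1 ! k \<in> carr T" "ccod T (snd S1 ! k) = V" "cdom T (snd S1 ! k) = fst S1 ! k"
        using vS1' k unfolding vobj_iff by auto
      then show ?thesis using wis_unit_restr[OF cat orb wD' D'S1', of "snd S1 ! k"] False by (simp add: Tf_def)
    qed
  qed
  have D'co: "D' V (vcoprod T S1 Tf)" using wD' D'S1 allT unfolding weak_indexing_system_def by blast
  define L2 where "L2 = j # i # Lr"
  have co: "vcoprod T S1 Tf = (map (nth xs) L2, map (nth ms) L2)"
  proof -
    have up: "[0..<length (fst S1)] = 0 # map Suc [0..<length Lr]"
      unfolding S1_def by (simp add: upt_conv_Cons map_Suc_upt del: upt_Suc)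
    have Lrn: "\<And>k. k < length Lr \<Longrightarrow> Lr!k < n" unfolding Lr_def using nth_mem by fastforce
    have e1: "\<And>k. k < length Lr \<Longrightarrow> ccomp T (ms!(Lr!k)) (cid T (xs!(Lr!k))) = ms!(Lr!k)"
      using vo Lrn catD(6)[OF cat] by metis
    have e0: "ccomp T (ms!j) (cid T (xs!j)) = ms!j" using vo ij catD(6)[OF cat] by metis
    have f1: "map (\<lambda>k. ccomp T (ms!(Lr!k)) (cid T (xs!(Lr!k)))) [0..<length Lr] = map (nth ms) Lr"
      by (rule nth_equalityI) (auto simp: e1)
    have m1: "map ((\<lambda>k. fst (vind T (snd S1 ! k) (Tf k))) \<circ> Suc) [0..<length Lr] = map (\<lambda>k. [xs!(Lr!k)]) [0..<length Lr]"
      by (rule map_cong) (auto simp: Tf_def S1_def vind_def vstar_def)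
    have m2: "map ((\<lambda>k. snd (vind T (snd S1 ! k) (Tf k))) \<circ> Suc) [0..<length Lr] = map (\<lambda>k. [ms!(Lr!k)]) [0..<length Lr]"
      by (rule map_cong) (auto simp: Tf_def S1_def vind_def vstar_def e1)
    have g1: "concat (map ((\<lambda>k. fst (vind T (snd S1 ! k) (Tf k))) \<circ> Suc) [0..<length Lr]) = map (nth xs) Lr"
      unfolding m1 concat_single map_nth_comp ..
    have g2: "concat (map ((\<lambda>k. snd (vind T (snd S1 ! k) (Tf k))) \<circ> Suc) [0..<length Lr]) = map (nth ms) Lr"
      unfolding m2 concat_single map_nth_comp ..
    show ?thesis
      unfolding vcoprod_def up list.map(2) map_map concat.simps(2) g1 g2
      by (simp add: Tf_def S1_def T0_def vind_def L2_def e0 m(4))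
  qed
  have dL2: "distinct L2" using ij unfolding L2_def Lr_def by auto
  have sL2: "set L2 = {..<length xs}" using ij n unfolding L2_def Lr_def by auto
  show ?thesis using isoD'[OF D'co[unfolded co] perm_list(1)[OF cat v dL2 sL2]] .
qed



lemma sparse_nopair:
  assumes cat: "is_cat T" and v: "vobj T V (xs,ms)"
    and np: "\<not> (\<exists>i j m. i < length xs \<and> j < length xs \<and> i \<noteq> j \<and> m \<in> carr T \<and> cdom T m = xs!i \<and> ccod T m = xs!j
               \<and> ccomp T (ms!j) m = ms!i)"
  shows "sparse T V (xs,ms)"
proof -
  have lm: "length ms = length xs" using v by (simp add: vobj_iff)
  have vo: "\<And>k. k < length xs \<Longrightarrow> ms!k \<in> carr T \<and> cdom T (ms!k) = xs!k \<and> ccod T (ms!k) = V \<and> xs!k \<in> cobj T"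
    using v by (auto simp: vobj_iff)
  show ?thesis unfolding sparse_def
  proof (intro conjI exI)
    show "vobj T V (xs,ms)" by fact
    show "\<forall>k<length (zip xs ms). fst (zip xs ms!k) \<in> cobj T \<and> snd (zip xs ms!k) \<in> carr T
            \<and> cdom T (snd (zip xs ms!k)) = fst (zip xs ms!k) \<and> ccod T (snd (zip xs ms!k)) = V"
      using vo lm by auto
    show "\<forall>i<length (zip xs ms). \<forall>j<length (zip xs ms). i \<noteq> j \<longrightarrow> \<not> (\<exists>m\<in>carr T. cdom T m = fst (zip xs ms!i) \<and> ccod T m = fst (zip xs ms!j)
                  \<and> ccomp T (snd (zip xs ms!j)) m = snd (zip xs ms!i))"
      using np lm by auto
    show "viso T V (xs,ms) (vunion (if False then vstar T V else ([], [])) (map fst (zip xs ms), map snd (zip xs ms)))"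
      using viso_refl[OF cat v] lm by (simp add: vunion_def)
  qed
qed

theorem mainTheorem20:
  fixes T :: "('o, 'm) cat" and \<C> :: "('o, 'm) tcoll"
  assumes "is_cat T" and "orbital T" and "atomic T"
    and "weak_indexing_system T \<C>"
    and "almost_essentially_unital T \<C>"
  shows "\<C> = wis_closure T (sparse_part T \<C>)"
proof (intro ext iffI)
  fix V S
  assume "wis_closure T (sparse_part T \<C>) V S"
  then show "\<C> V S" using assms(4) unfolding wis_closure_def sparse_part_def by blast
next
  fix V S
  assume CS: "\<C> V S"
  show "wis_closure T (sparse_part T \<C>) V S" unfolding wis_closure_def
  proof (intro allI impI, elim conjE)
    fix D' assume wD': "weak_indexing_system T D'" and sub0: "\<forall>W R. sparse_part T \<C> W R \<longrightarrow> D' W R"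
    have sub: "\<And>W R. sparse_part T \<C> W R \<Longrightarrow> D' W R" using sub0 by blast
    have "\<And>V xs ms. length xs = n \<Longrightarrow> \<C> V (xs,ms) \<Longrightarrow> D' V (xs,ms)" for n
    proof (induction n rule: less_induct)
      case (less n)
      show ?case
      proof (cases "\<exists>i j m. i < length xs \<and> j < length xs \<and> i \<noteq> j \<and> m \<in> carr T \<and> cdom T m = xs!i \<and> ccod T m = xs!j
               \<and> ccomp T (ms!j) m = ms!i")
        case True
        then obtain i j m where ijm: "i < length xs" "j < length xs" "i \<noteq> j" "m \<in> carr T" "cdom T m = xs!i" "ccod T m = xs!j"
               "ccomp T (ms!j) m = ms!i" by blast
        have IH: "\<And>S'. length (fst S') < n \<Longrightarrow> \<C> V S' \<Longrightarrow> D' V S'"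
          using less.IH by (metis prod.collapse)
        show ?thesis
          by (rule step[OF assms wD' sub less.prems(2) less.prems(1)[symmetric] ijm(1,2)[unfolded less.prems(1)] ijm(3-7) IH])
      next
        case False
        have v: "vobj T V (xs,ms)" using assms(4) less.prems(2)
          unfolding weak_indexing_system_def full_tsubcat_def by blast
        have "sparse T V (xs,ms)" using sparse_nopair[OF assms(1) v False] .
        then show ?thesis using sub less.prems(2) by (simp add: sparse_part_def)
      qed
    qed
    then show "D' V S" using CS by (metis prod.collapse)
  qed
qed

end
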